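(* Let $n \geq 3$. If $Z : \mathcal{P}_o^n \to \mathcal{K}_o^n$ is an $\mathrm{SL}(n)$ covariant $L_\infty$ Minkowski valuation, then $$h_{Z(sT^d)}(\pm e_1) = s\,h_{ZT^d}(\pm e_1)$$ for $1 \leq d \leq n$ and $s>0$, and $$h_{ZT^1}(e_1) \leq \dots \leq h_{ZT^n}(e_1),\qquad h_{ZT^1}(-e_1) \leq \dots \leq h_{ZT^n}(-e_1).$$
   Context: $\mathcal{K}_o^n$ denotes the set of convex bodies in $\mathbb{R}^n$ containing the origin $o$, and $\mathcal{P}_o^n$ the set of convex polytopes in $\mathbb{R}^n$ containing the origin. $h_K$ is the support function of $K$. $e_1,\dots,e_n$ is the standard basis and $T^d=[o,e_1,\dots,e_d]$ (convex hull) for $1\le d\le n$. For $K,L\in\mathcal{K}_o^n$, $K+_\infty L$ is the convex body with support function $\max\{h_K,h_L\}$. $Z$ is an $L_\infty$ Minkowski valuation if $Z(K\cup L)+_\infty Z(K\cap L)=ZK+_\infty ZL$ whenever $K,L,K\cup L,K\cap L\in\mathcal{P}_o^n$; it is $\mathrm{SL}(n)$ covariant if $Z(\phi K)=\phi ZK$ for all $\phi\in\mathrm{SL}(n)$. *)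

theory Defs
  imports "HOL-Analysis.Analysis"
begin

text \<open>Euclidean space R^n is modelled as real^'n with 'n a finite type; n = CARD('n).
  The index type carries a well-order, used only to enumerate the standard basis
  e_1, ..., e_n (every finite type admits such an order).\<close>

definition support_fun :: "(real^'n) set \<Rightarrow> real^'n \<Rightarrow> real" where
  "support_fun K u = Sup ((\<lambda>x. x \<bullet> u) ` K)"

definition convex_bodies_o :: "(real^'n) set set" where
  "convex_bodies_o = {K. compact K \<and> convex K \<and> 0 \<in> K}"

definition polytopes_o :: "(real^'n) set set" where
  "polytopes_o = {P. polytope P \<and> 0 \<in> P}"

definition std_basis :: "nat \<Rightarrow> real^'n::{finite,wellorder}" where
  "std_basis k = axis (sorted_list_of_set (UNIV :: 'n set) ! (k - 1)) 1"

definition simplex_T :: "nat \<Rightarrow> (real^'n::{finite,wellorder}) set" where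
  "simplex_T d = convex hull (insert 0 {std_basis k | k. 1 \<le> k \<and> k \<le> d})"

text \<open>Z(K u L) +_inf Z(K n L) = ZK +_inf ZL, stated via support functions
  (K +_inf L is the convex body with support function max h_K h_L).\<close>
definition Linf_valuation :: "((real^'n) set \<Rightarrow> (real^'n) set) \<Rightarrow> bool" where
  "Linf_valuation Z \<longleftrightarrow>
     (\<forall>K L. K \<in> polytopes_o \<and> L \<in> polytopes_o \<and> K \<union> L \<in> polytopes_o \<and> K \<inter> L \<in> polytopes_o \<longrightarrow>
        (\<forall>u. max (support_fun (Z (K \<union> L)) u) (support_fun (Z (K \<inter> L)) u)
             = max (support_fun (Z K) u) (support_fun (Z L) u)))"

definition SL_covariant :: "((real^'n) set \<Rightarrow> (real^'n) set) \<Rightarrow> bool" where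
  "SL_covariant Z \<longleftrightarrow>
     (\<forall>A :: real^'n^'n. det A = 1 \<longrightarrow>
        (\<forall>P \<in> polytopes_o. Z ((\<lambda>x. A *v x) ` P) = (\<lambda>x. A *v x) ` Z P))"

end

theory Submission
  imports Defs
begin

declare [[coercion_enabled = false]]


lemma Sup_cmult:
  fixes f :: "'a \<Rightarrow> real"
  assumes "K \<noteq> {}" "bdd_above (f ` K)" "c > 0"
  shows "Sup ((\<lambda>x. c * f x) ` K) = c * Sup (f ` K)"
proof (rule antisym)
  show "Sup ((\<lambda>x. c * f x) ` K) \<le> c * Sup (f ` K)"
    by (rule cSUP_least) (use assms in \<open>auto intro!: mult_left_mono cSUP_upper\<close>)
  have b2: "bdd_above ((\<lambda>x. c * f x) ` K)"
  proof -
    obtain M where "\<forall>x\<in>K. f x \<le> M" using assms(2) by (auto simp: bdd_above_def)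
    then show ?thesis using assms(3) by (auto simp: bdd_above_def intro!: exI[of _ "c*M"] mult_left_mono)
  qed
  have "Sup (f ` K) \<le> Sup ((\<lambda>x. c * f x) ` K) / c"
  proof (rule cSUP_least)
    fix x assume "x \<in> K"
    then have "c * f x \<le> Sup ((\<lambda>x. c * f x) ` K)" using b2 by (intro cSUP_upper)
    then show "f x \<le> Sup ((\<lambda>x. c * f x) ` K) / c" using assms(3) by (simp add: field_simps)
  qed (use assms in auto)
  then show "c * Sup (f ` K) \<le> Sup ((\<lambda>x. c * f x) ` K)" using assms(3) by (simp add: field_simps)
qed

lemma support_fun_scale:
  assumes "K \<in> convex_bodies_o" "c > 0"
  shows "support_fun K (c *\<^sub>R u) = c * support_fun K u"
proof -
  have "K \<noteq> {}" using assms by (auto simp: convex_bodies_o_def)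
  moreover have "bdd_above ((\<lambda>x. x \<bullet> u) ` K)"
    using assms unfolding convex_bodies_o_def
    by (auto intro!: bounded_imp_bdd_above compact_imp_bounded compact_continuous_image continuous_intros)
  ultimately show ?thesis
    unfolding support_fun_def using Sup_cmult[of K "\<lambda>x. x \<bullet> u" c] assms(2)
    by (simp add: inner_scaleR_right)
qed

lemma support_fun_image:
  "support_fun ((\<lambda>x. A *v x) ` K) u = support_fun K (transpose A *v u)"
  unfolding support_fun_def image_image
  by (simp add: dot_lmul_matrix[symmetric] inner_commute)

lemma SL_transfer:
  assumes "SL_covariant Z" "det A = 1" "P \<in> polytopes_o" "Q = (\<lambda>x. A *v x) ` P"
  shows "support_fun (Z Q) u = support_fun (Z P) (transpose A *v u)"
  using assms by (simp add: SL_covariant_def support_fun_image)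




definition ix :: "nat \<Rightarrow> 'n::{finite,wellorder}" where
  "ix k = sorted_list_of_set (UNIV::'n set) ! (k - 1)"

definition Rd :: "nat \<Rightarrow> 'n::{finite,wellorder} set" where
  "Rd d = {ix k | k. 1 \<le> k \<and> k \<le> d}"

definition SS :: "'n set \<Rightarrow> real \<Rightarrow> (real^'n) set" where
  "SS R s = {x. (\<forall>i. 0 \<le> x$i) \<and> (\<forall>i. i \<notin> R \<longrightarrow> x$i = 0) \<and> sum (\<lambda>i. x$i) UNIV \<le> s}"

lemma std_basis_ix: "std_basis k = axis (ix k) 1"
  by (simp add: std_basis_def ix_def)

lemma ix_inj:
  assumes "1 \<le> k" "k \<le> CARD('n)" "1 \<le> l" "l \<le> CARD('n)" "ix k = (ix l :: 'n::{finite,wellorder})"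
  shows "k = l"
proof -
  let ?xs = "sorted_list_of_set (UNIV::'n set)"
  have "distinct ?xs" "length ?xs = CARD('n)" by auto
  then show ?thesis using assms unfolding ix_def
    by (metis One_nat_def Suc_pred le_simps(3) nat_less_le nth_eq_iff_index_eq)
qed

lemma ix_surj:
  fixes i :: "'n::{finite,wellorder}"
  shows "\<exists>k. 1 \<le> k \<and> k \<le> CARD('n) \<and> i = ix k"
proof -
  let ?xs = "sorted_list_of_set (UNIV::'n set)"
  have "i \<in> set ?xs" by auto
  then obtain j where "j < length ?xs" "?xs ! j = i" by (metis in_set_conv_nth)
  then show ?thesis by (intro exI[of _ "Suc j"]) (auto simp: ix_def)
qed

lemma ix_in_Rd:
  assumes "1 \<le> k" "k \<le> CARD('n)" "d \<le> CARD('n)"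
  shows "(ix k :: 'n::{finite,wellorder}) \<in> Rd d \<longleftrightarrow> k \<le> d"
proof (rule iffI)
  assume "(ix k :: 'n) \<in> Rd d"
  then obtain l where l: "1 \<le> l" "l \<le> d" "(ix k :: 'n) = ix l" unfolding Rd_def by blast
  have "l \<le> CARD('n)" using l assms by linarith
  then have "k = l" using ix_inj[where 'n='n, of k l] assms l by blast
  then show "k \<le> d" using l by simp
next
  assume "k \<le> d" then show "(ix k :: 'n) \<in> Rd d" using assms unfolding Rd_def by blast
qed

lemma Rd_full: "Rd CARD('n) = (UNIV :: 'n::{finite,wellorder} set)"
  unfolding Rd_def using ix_surj by auto

lemma Rd_minus:
  assumes "CARD('n) \<ge> 1"
  shows "Rd (CARD('n) - 1) = UNIV - {ix CARD('n) :: 'n::{finite,wellorder}}"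
proof -
  { fix i :: 'n
    obtain k where k: "1 \<le> k" "k \<le> CARD('n)" "i = ix k" using ix_surj by blast
    have "i \<in> Rd (CARD('n) - 1) \<longleftrightarrow> i \<noteq> ix CARD('n)"
    proof (cases "k = CARD('n)")
      case True then show ?thesis using k ix_in_Rd[where 'n='n, of k "CARD('n) - 1"] assms by auto
    next
      case False then show ?thesis
        using k ix_in_Rd[where 'n='n, of k "CARD('n) - 1"] ix_inj[where 'n='n, of k "CARD('n)"] assms by auto
    qed }
  then show ?thesis by auto
qed

lemma Rd_Suc:
  assumes "Suc d \<le> CARD('n)"
  shows "Rd (Suc d) = insert (ix (Suc d)) (Rd d :: 'n::{finite,wellorder} set)"
    "ix (Suc d) \<notin> (Rd d :: 'n set)"
proof -
  show "Rd (Suc d) = insert (ix (Suc d)) (Rd d :: 'n::{finite,wellorder} set)"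
    unfolding Rd_def by (auto simp: le_Suc_eq)
  show "ix (Suc d) \<notin> (Rd d :: 'n set)" using ix_in_Rd[where 'n='n, of "Suc d" d] assms by auto
qed

lemma simplex_T_SS: "(simplex_T d :: (real^'n::{finite,wellorder}) set) = SS (Rd d) (1 :: real)"
proof -
  have e: "{std_basis k | k. 1 \<le> k \<and> k \<le> d} = (\<lambda>i. axis i 1) ` (Rd d :: 'n set)"
    unfolding Rd_def std_basis_ix by auto
  have sub: "(\<lambda>i. axis i (1::real)) ` (Rd d :: 'n set) \<subseteq> Basis"
    by auto
  have inj: "inj_on (\<lambda>i::'n. axis i (1::real)) (Rd d)" by (auto simp: inj_on_def axis_eq_axis)
  show ?thesis
    unfolding simplex_T_def e substd_simplex[OF sub]
  proof (intro set_eqI iffI)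
    fix x :: "(real, 'n) vec"
    assume x: "x \<in> {x. (\<forall>i\<in>Basis. 0 \<le> x \<bullet> i) \<and> (\<Sum>i\<in>(\<lambda>i. axis i 1) ` Rd d. x \<bullet> i) \<le> 1 \<and>
               (\<forall>i\<in>Basis. i \<notin> (\<lambda>i. axis i 1) ` Rd d \<longrightarrow> x \<bullet> i = 0)}"
    have p: "\<forall>i. 0 \<le> x$i" using x by (auto simp: Basis_vec_def cart_eq_inner_axis)
    have z: "\<forall>i. i \<notin> Rd d \<longrightarrow> x$i = 0" using x by (auto simp: Basis_vec_def cart_eq_inner_axis axis_eq_axis)
    have "sum (\<lambda>i. x$i) (Rd d) \<le> 1" using x by (simp add: sum.reindex[OF inj] cart_eq_inner_axis)
    moreover have "sum (\<lambda>i. x$i) UNIV = sum (\<lambda>i. x$i) (Rd d)"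
      by (rule sum.mono_neutral_right) (use z in auto)
    ultimately show "x \<in> SS (Rd d) 1" using p z by (simp add: SS_def)
  next
    fix x :: "(real, 'n) vec"
    assume x: "x \<in> SS (Rd d) 1"
    have z: "\<forall>i. i \<notin> Rd d \<longrightarrow> x$i = 0" using x by (simp add: SS_def)
    have "sum (\<lambda>i. x$i) UNIV = sum (\<lambda>i. x$i) (Rd d)"
      by (rule sum.mono_neutral_right) (use z in auto)
    have b: "\<And>j::(real,'n) vec. j \<in> Basis \<Longrightarrow> \<exists>i. j = axis i 1" by (auto simp: Basis_vec_def)
    have p1: "\<forall>j\<in>Basis. 0 \<le> x \<bullet> j"
    proof
      fix j :: "(real,'n) vec" assume "j \<in> Basis"
      then obtain i where "j = axis i 1" using b by blast
      then show "0 \<le> x \<bullet> j" using x by (simp add: SS_def inner_axis)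
    qed
    have p3: "\<forall>j\<in>Basis. j \<notin> (\<lambda>i. axis i 1) ` Rd d \<longrightarrow> x \<bullet> j = 0"
    proof (intro ballI impI)
      fix j :: "(real,'n) vec" assume "j \<in> Basis" "j \<notin> (\<lambda>i. axis i 1) ` Rd d"
      then obtain i where "j = axis i 1" "i \<notin> Rd d" using b by blast
      then show "x \<bullet> j = 0" using z by (simp add: inner_axis)
    qed
    have "(\<Sum>j\<in>(\<lambda>i. axis i 1) ` Rd d. x \<bullet> j) = sum (\<lambda>i. x$i) (Rd d)"
      by (simp add: sum.reindex[OF inj] inner_axis)
    then have p2: "(\<Sum>j\<in>(\<lambda>i. axis i 1) ` Rd d. x \<bullet> j) \<le> 1"
      using x \<open>sum (\<lambda>i. x$i) UNIV = sum (\<lambda>i. x$i) (Rd d)\<close> by (simp add: SS_def)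
    show "x \<in> {x. (\<forall>i\<in>Basis. 0 \<le> x \<bullet> i) \<and> (\<Sum>i\<in>(\<lambda>i. axis i 1) ` Rd d. x \<bullet> i) \<le> 1 \<and>
               (\<forall>i\<in>Basis. i \<notin> (\<lambda>i. axis i 1) ` Rd d \<longrightarrow> x \<bullet> i = 0)}"
      using p1 p2 p3 by blast
  qed
qed

lemma image_inv:
  assumes "\<And>x. g (f x) = x" "\<And>y. f (g y) = y"
  shows "f ` S = {y. g y \<in> S}"
  using assms by (auto; metis image_eqI)

lemma SS_scale:
  fixes R :: "'n::finite set"
  assumes "s > 0"
  shows "(\<lambda>x. s *\<^sub>R x) ` SS R 1 = SS R s"
proof -
  have "(\<lambda>x. s *\<^sub>R x) ` SS R 1 = {y. (1/s) *\<^sub>R y \<in> SS R 1}"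
    by (rule image_inv) (use assms in auto)
  also have "\<dots> = SS R s"
  proof -
    have "sum (\<lambda>i. y$i / s) UNIV = sum (\<lambda>i. y$i) UNIV / s" for y :: "real^'n"
      by (simp add: sum_divide_distrib)
    then show ?thesis using assms by (auto simp: SS_def divide_le_eq zero_le_divide_iff sum_divide_distrib[symmetric])
  qed
  finally show ?thesis .
qed

lemma SS_polytope:
  assumes "s > 0"
  shows "SS (Rd d :: 'n::{finite,wellorder} set) s \<in> polytopes_o"
proof -
  have "polytope (simplex_T d :: (real, 'n) vec set)"
    unfolding simplex_T_def by (rule polytope_convex_hull) (auto simp: Rd_def)
  then have "polytope ((\<lambda>x. s *\<^sub>R x) ` (simplex_T d :: (real, 'n) vec set))"
    by (intro polytope_linear_image) (auto intro: linear_scaleR)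
  then have "polytope (SS (Rd d) s :: (real, 'n) vec set)" using assms SS_scale[of s "Rd d"] simplex_T_SS[where 'n='n, of d] by metis
  then show ?thesis using assms by (simp add: polytopes_o_def SS_def)
qed



definition mg :: "'n::finite \<Rightarrow> 'n \<Rightarrow> real \<Rightarrow> real \<Rightarrow> real \<Rightarrow> real \<Rightarrow> real \<Rightarrow> real^'n^'n" where
  "mg a b \<mu> \<alpha> \<beta> \<gamma> \<delta> = (\<chi> i j. if i = a then (if j = a then \<alpha> else if j = b then \<beta> else 0)
     else if i = b then (if j = a then \<gamma> else if j = b then \<delta> else 0) else if i = j then \<mu> else 0)"

lemma mg_entry:
  "(mg a b \<mu> \<alpha> \<beta> \<gamma> \<delta>)$i$j = (if i = a then (if j = a then \<alpha> else if j = b then \<beta> else 0)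
     else if i = b then (if j = a then \<gamma> else if j = b then \<delta> else 0) else if i = j then \<mu> else 0)"
  unfolding mg_def by (simp only: vec_lambda_beta)

lemma sum_two:
  fixes f :: "'n::finite \<Rightarrow> real"
  assumes "a \<noteq> b"
  shows "sum f UNIV = f a + f b + sum f (UNIV - {a, b})"
proof -
  have "sum f UNIV = f a + sum f (UNIV - {a})" by (simp add: sum.remove)
  also have "sum f (UNIV - {a}) = f b + sum f (UNIV - {a} - {b})"
    using assms by (intro sum.remove) auto
  finally show ?thesis by (simp add: Diff_insert2[symmetric] insert_commute)
qed

lemma mg_mv:
  assumes "a \<noteq> b"
  shows "(mg a b \<mu> \<alpha> \<beta> \<gamma> \<delta> *v x) $ i =
    (if i = a then \<alpha> * x$a + \<beta> * x$b else if i = b then \<gamma> * x$a + \<delta> * x$b else \<mu> * x$i)"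
proof -
  have e: "(mg a b \<mu> \<alpha> \<beta> \<gamma> \<delta> *v x) $ i = sum (\<lambda>j. (mg a b \<mu> \<alpha> \<beta> \<gamma> \<delta>)$i$j * x$j) UNIV"
    by (simp add: matrix_vector_mult_def)
  show ?thesis
  proof (cases "i = a \<or> i = b")
    case True
    have z: "sum (\<lambda>j. (mg a b \<mu> \<alpha> \<beta> \<gamma> \<delta>)$i$j * x$j) (UNIV - {a, b}) = 0"
      using True by (intro sum.neutral) (auto simp: mg_def)
    show ?thesis unfolding e sum_two[OF assms] z using True assms by (auto simp: mg_def)
  next
    case False
    have "sum (\<lambda>j. (mg a b \<mu> \<alpha> \<beta> \<gamma> \<delta>)$i$j * x$j) UNIV = sum (\<lambda>j. if j = i then \<mu> * x$i else 0) UNIV"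
      using False by (intro sum.cong) (auto simp: mg_def)
    then show ?thesis unfolding e using False by simp
  qed
qed

lemma mg_T:
  assumes "a \<noteq> b" "u$a = 0" "u$b = 0"
  shows "Finite_Cartesian_Product.transpose (mg a b \<mu> \<alpha> \<beta> \<gamma> \<delta>) *v u = \<mu> *\<^sub>R u"
proof -
  have "(Finite_Cartesian_Product.transpose (mg a b \<mu> \<alpha> \<beta> \<gamma> \<delta>) *v u) $ j = \<mu> * u$j" for j
  proof -
    have "(Finite_Cartesian_Product.transpose (mg a b \<mu> \<alpha> \<beta> \<gamma> \<delta>) *v u) $ j
        = sum (\<lambda>i. (mg a b \<mu> \<alpha> \<beta> \<gamma> \<delta>)$i$j * u$i) UNIV"
      by (simp add: matrix_vector_mult_def transpose_def)
    also have "\<dots> = sum (\<lambda>i. if i = j then \<mu> * u$j else 0) UNIV"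
      using assms by (intro sum.cong) (auto simp: mg_def)
    finally show ?thesis by simp
  qed
  then show ?thesis by (simp add: vec_eq_iff)
qed

lemma prod_two:
  fixes f :: "'n::finite \<Rightarrow> real"
  assumes "a \<noteq> b"
  shows "prod f UNIV = f a * f b * prod f (UNIV - {a, b})"
proof -
  have "prod f UNIV = f a * prod f (UNIV - {a})" by (simp add: prod.remove)
  also have "prod f (UNIV - {a}) = f b * prod f (UNIV - {a} - {b})"
    using assms by (intro prod.remove) auto
  finally show ?thesis by (simp add: Diff_insert2[symmetric] insert_commute)
qed

lemma mg_diag_prod:
  assumes "a \<noteq> (b::'n::finite)"
  shows "prod (\<lambda>i. (mg a b \<mu> \<alpha> \<beta> \<gamma> \<delta>)$i$i) UNIV = \<alpha> * \<delta> * \<mu> ^ (CARD('n) - 2)"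
proof -
  have "prod (\<lambda>i. (mg a b \<mu> \<alpha> \<beta> \<gamma> \<delta>)$i$i) (UNIV - {a, b}) = prod (\<lambda>i. \<mu>) (UNIV - {a, b})"
    by (intro prod.cong) (auto simp: mg_def)
  also have "\<dots> = \<mu> ^ (CARD('n) - 2)"
    using assms by (simp add: card_Diff_subset numeral_2_eq_2)
  finally show ?thesis using assms by (simp add: prod_two[OF assms] mg_def)
qed

lemma mg_offdiag:
  "i \<noteq> j \<Longrightarrow> (mg a b \<mu> \<alpha> \<beta> \<gamma> \<delta>)$i$j = (if i = a \<and> j = b then \<beta> else if i = b \<and> j = a then \<gamma> else 0)"
  unfolding mg_entry by (cases "i = a"; cases "i = b"; cases "j = a"; cases "j = b") simp_all

lemma mg_det_tri:
  assumes "a \<noteq> (b::'n::{finite,wellorder})" "\<beta> = 0 \<or> \<gamma> = 0"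
  shows "det (mg a b \<mu> \<alpha> \<beta> \<gamma> \<delta>) = \<alpha> * \<delta> * \<mu> ^ (CARD('n) - 2)"
proof -
  let ?M = "mg a b \<mu> \<alpha> \<beta> \<gamma> \<delta>"
  have "det ?M = prod (\<lambda>i. ?M$i$i) UNIV"
  proof (cases "a < b")
    case True
    show ?thesis using assms(2)
    proof
      assume z: "\<beta> = 0"
      show ?thesis
      proof (rule det_lowerdiagonal)
        fix i j :: 'n assume "i < j"
        then show "?M$i$j = 0" using True z by (simp add: mg_offdiag) (metis less_asym)
      qed
    next
      assume z: "\<gamma> = 0"
      show ?thesis
      proof (rule det_upperdiagonal)
        fix i j :: 'n assume "i > j"
        then show "?M$i$j = 0" using True z by (simp add: mg_offdiag) (metis less_asym)
      qed
    qed
  next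
    case False
    then have ba: "b < a" using assms(1) by auto
    show ?thesis using assms(2)
    proof
      assume z: "\<beta> = 0"
      show ?thesis
      proof (rule det_upperdiagonal)
        fix i j :: 'n assume "i > j"
        then show "?M$i$j = 0" using ba z by (simp add: mg_offdiag) (metis less_asym)
      qed
    next
      assume z: "\<gamma> = 0"
      show ?thesis
      proof (rule det_lowerdiagonal)
        fix i j :: 'n assume "i < j"
        then show "?M$i$j = 0" using ba z by (simp add: mg_offdiag) (metis less_asym)
      qed
    qed
  qed
  then show ?thesis using mg_diag_prod[OF assms(1)] by simp
qed

lemma mg_det_rot:
  assumes "a \<noteq> (b::'n::{finite,wellorder})"
  shows "det (mg a b 1 0 1 (-1) 0) = 1"
proof -
  let ?D = "mg a b 1 (-1) 0 0 1"
  let ?p = "Transposition.transpose a b"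
  have p: "?p permutes UNIV" by (rule permutes_swap_id) auto
  have eq: "mg a b 1 0 1 (-1) 0 = (\<chi> i. ?D $ ?p i)"
    using assms by (auto simp: vec_eq_iff mg_def Transposition.transpose_def)
  have dD: "det ?D = -1" using mg_det_tri[OF assms, of 0 0 1 "-1" 1] by simp
  have "det (\<chi> i. ?D $ ?p i) = of_int (sign ?p) * det ?D" by (rule det_permute_rows[OF p])
  also have "\<dots> = 1" unfolding dD sign_swap_id using assms by simp
  finally show ?thesis unfolding eq .
qed




definition Lbip :: "'n::finite set \<Rightarrow> 'n \<Rightarrow> real \<Rightarrow> (real^'n) set" where
  "Lbip R c s = {y. (\<forall>i. i \<noteq> c \<longrightarrow> 0 \<le> y$i) \<and> y$c \<le> 0 \<and> (\<forall>i. i \<notin> R \<longrightarrow> y$i = 0)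
      \<and> sum (\<lambda>i. y$i) UNIV - 2 * y$c \<le> s}"

definition Qbip :: "'n::finite set \<Rightarrow> 'n \<Rightarrow> real \<Rightarrow> (real^'n) set" where
  "Qbip R c s = {y. (\<forall>i. i \<noteq> c \<longrightarrow> 0 \<le> y$i) \<and> (\<forall>i. i \<notin> R \<longrightarrow> y$i = 0)
      \<and> sum (\<lambda>i. y$i) UNIV \<le> s \<and> sum (\<lambda>i. y$i) UNIV - 2 * y$c \<le> s}"

lemma sum_mod2:
  fixes y z :: "real^'n::finite"
  assumes ne: "a \<noteq> c" and rest: "\<And>i. i \<noteq> a \<Longrightarrow> i \<noteq> c \<Longrightarrow> z$i = y$i"
  shows "sum (\<lambda>i. z$i) UNIV = sum (\<lambda>i. y$i) UNIV + (z$a - y$a) + (z$c - y$c)"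
proof -
  have r: "sum (\<lambda>i. z$i) (UNIV - {a,c}) = sum (\<lambda>i. y$i) (UNIV - {a,c})"
    by (rule sum.cong) (use rest in auto)
  show ?thesis using sum_two[OF ne, of "\<lambda>i. z$i"] sum_two[OF ne, of "\<lambda>i. y$i"] r by simp
qed

lemma bip_rot:
  fixes R :: "'n::finite set"
  assumes ne: "a \<noteq> c" and aR: "a \<in> R" and cR: "c \<in> R"
  shows "(\<lambda>x. mg a c 1 0 1 (-1) 0 *v x) ` SS R s = Lbip R c s"
proof -
  let ?G = "mg a c 1 0 (-1) 1 0"
  have "(\<lambda>x. mg a c 1 0 1 (-1) 0 *v x) ` SS R s = {y. ?G *v y \<in> SS R s}"
    by (rule image_inv) (use ne in \<open>simp_all add: vec_eq_iff mg_mv[OF ne]\<close>)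
  also have "\<dots> = Lbip R c s"
  proof (intro set_eqI)
    fix y :: "real^'n"
    have g: "(?G *v y)$i = (if i = a then - y$c else if i = c then y$a else y$i)" for i
      by (simp add: mg_mv[OF ne])
    have sm: "sum (\<lambda>i. (?G *v y)$i) UNIV = sum (\<lambda>i. y$i) UNIV - 2 * y$c"
      using sum_mod2[OF ne, of "?G *v y" y] g ne by simp
    have p: "(\<forall>i. 0 \<le> (?G *v y)$i) \<longleftrightarrow> (\<forall>i. i \<noteq> c \<longrightarrow> 0 \<le> y$i) \<and> y$c \<le> 0"
    proof
      assume H: "\<forall>i. 0 \<le> (?G *v y)$i"
      have "0 \<le> (?G *v y)$a" "0 \<le> (?G *v y)$c" "\<And>i. 0 \<le> (?G *v y)$i" using H by auto
      then show "(\<forall>i. i \<noteq> c \<longrightarrow> 0 \<le> y$i) \<and> y$c \<le> 0" unfolding g using ne by (metis neg_0_le_iff_le)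
    next
      assume "(\<forall>i. i \<noteq> c \<longrightarrow> 0 \<le> y$i) \<and> y$c \<le> 0"
      then show "\<forall>i. 0 \<le> (?G *v y)$i" unfolding g using ne by auto
    qed
    have z: "(\<forall>i. i \<notin> R \<longrightarrow> (?G *v y)$i = 0) \<longleftrightarrow> (\<forall>i. i \<notin> R \<longrightarrow> y$i = 0)"
      unfolding g using aR cR by auto
    show "y \<in> {y. ?G *v y \<in> SS R s} \<longleftrightarrow> y \<in> Lbip R c s"
      unfolding SS_def Lbip_def mem_Collect_eq sm p z by blast
  qed
  finally show ?thesis .
qed

lemma bip_diag:
  fixes R :: "'n::finite set"
  assumes ne: "a \<noteq> c" and aR: "a \<notin> R" and cR: "c \<in> R"
  shows "(\<lambda>x. mg a c 1 (-1) 0 0 (-1) *v x) ` SS R s = Lbip R c s"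
proof -
  let ?G = "mg a c 1 (-1) 0 0 (-1)"
  have "(\<lambda>x. ?G *v x) ` SS R s = {y. ?G *v y \<in> SS R s}"
    by (rule image_inv) (simp_all add: vec_eq_iff mg_mv[OF ne])
  also have "\<dots> = Lbip R c s"
  proof (intro set_eqI)
    fix y :: "real^'n"
    have g: "(?G *v y)$i = (if i = a then - y$a else if i = c then - y$c else y$i)" for i
      by (simp add: mg_mv[OF ne])
    have sm: "sum (\<lambda>i. (?G *v y)$i) UNIV = sum (\<lambda>i. y$i) UNIV - 2 * y$a - 2 * y$c"
      using sum_mod2[OF ne, of "?G *v y" y] g ne by simp
    show "y \<in> {y. ?G *v y \<in> SS R s} \<longleftrightarrow> y \<in> Lbip R c s"
    proof
      assume "y \<in> {y. ?G *v y \<in> SS R s}"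
      then have H: "\<forall>i. 0 \<le> (?G *v y)$i" "\<forall>i. i \<notin> R \<longrightarrow> (?G *v y)$i = 0"
        "sum (\<lambda>i. (?G *v y)$i) UNIV \<le> s" by (auto simp: SS_def)
      have ya: "y$a = 0" using spec[OF H(2), of a] aR unfolding g by simp
      have yc: "y$c \<le> 0" using spec[OF H(1), of c] ne unfolding g by simp
      have "\<forall>i. i \<noteq> c \<longrightarrow> 0 \<le> y$i"
      proof (intro allI impI)
        fix i assume "i \<noteq> c"
        then show "0 \<le> y$i" using spec[OF H(1), of i] ya unfolding g by (cases "i = a") auto
      qed
      moreover have "\<forall>i. i \<notin> R \<longrightarrow> y$i = 0"
      proof (intro allI impI)
        fix i assume "i \<notin> R"
        then show "y$i = 0" using spec[OF H(2), of i] ya cR unfolding g by (cases "i = a"; cases "i = c") auto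
      qed
      ultimately show "y \<in> Lbip R c s" using ya yc H(3) sm by (simp add: Lbip_def)
    next
      assume "y \<in> Lbip R c s"
      then have L: "\<forall>i. i \<noteq> c \<longrightarrow> 0 \<le> y$i" "y$c \<le> 0" "\<forall>i. i \<notin> R \<longrightarrow> y$i = 0"
        "sum (\<lambda>i. y$i) UNIV - 2 * y$c \<le> s" by (auto simp: Lbip_def)
      have ya: "y$a = 0" using L(3) aR by simp
      have "\<forall>i. 0 \<le> (?G *v y)$i" using L(1,2) ya unfolding g by auto
      moreover have "\<forall>i. i \<notin> R \<longrightarrow> (?G *v y)$i = 0" using L(3) ya cR unfolding g by auto
      ultimately show "y \<in> {y. ?G *v y \<in> SS R s}" using L(4) ya sm by (simp add: SS_def)
    qed
  qed
  finally show ?thesis .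
qed

lemma bip_int:
  assumes cR: "c \<notin> R0"
  shows "SS (insert c R0) s \<inter> Lbip (insert c R0) c s = SS R0 s"
proof (intro set_eqI iffI)
  fix y assume "y \<in> SS (insert c R0) s \<inter> Lbip (insert c R0) c s"
  then have H: "\<forall>i. 0 \<le> y$i" "\<forall>i. i \<notin> insert c R0 \<longrightarrow> y$i = 0" "sum (\<lambda>i. y$i) UNIV \<le> s"
    "y$c \<le> 0" unfolding SS_def Lbip_def by auto
  have "y$c = 0" using H(1,4) by (meson order_antisym)
  then have "\<forall>i. i \<notin> R0 \<longrightarrow> y$i = 0" using H(2) by (metis insertE)
  then show "y \<in> SS R0 s" using H unfolding SS_def by blast
next
  fix y assume "y \<in> SS R0 s"
  then have H: "\<forall>i. 0 \<le> y$i" "\<forall>i. i \<notin> R0 \<longrightarrow> y$i = 0" "sum (\<lambda>i. y$i) UNIV \<le> s"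
    unfolding SS_def by auto
  have yc: "y$c = 0" using H(2) cR by blast
  have "y \<in> SS (insert c R0) s" using H unfolding SS_def by blast
  moreover have "y \<in> Lbip (insert c R0) c s" using H yc unfolding Lbip_def by auto
  ultimately show "y \<in> SS (insert c R0) s \<inter> Lbip (insert c R0) c s" by blast
qed

lemma bip_union:
  "SS R s \<union> Lbip R c s = Qbip R c s"
proof (intro set_eqI iffI)
  fix y assume "y \<in> SS R s \<union> Lbip R c s"
  then show "y \<in> Qbip R c s"
  proof
    assume "y \<in> SS R s"
    then have H: "\<forall>i. 0 \<le> y$i" "\<forall>i. i \<notin> R \<longrightarrow> y$i = 0" "sum (\<lambda>i. y$i) UNIV \<le> s"
      unfolding SS_def by auto
    have "0 \<le> y$c" using H(1) by blast
    then have "sum (\<lambda>i. y$i) UNIV - 2 * y$c \<le> s" using H(3) by linarith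
    then show ?thesis using H unfolding Qbip_def by blast
  next
    assume "y \<in> Lbip R c s"
    then have H: "\<forall>i. i \<noteq> c \<longrightarrow> 0 \<le> y$i" "y$c \<le> 0" "\<forall>i. i \<notin> R \<longrightarrow> y$i = 0"
      "sum (\<lambda>i. y$i) UNIV - 2 * y$c \<le> s" unfolding Lbip_def by auto
    then have "sum (\<lambda>i. y$i) UNIV \<le> s" by linarith
    then show ?thesis using H unfolding Qbip_def by blast
  qed
next
  fix y assume "y \<in> Qbip R c s"
  then have H: "\<forall>i. i \<noteq> c \<longrightarrow> 0 \<le> y$i" "\<forall>i. i \<notin> R \<longrightarrow> y$i = 0"
      "sum (\<lambda>i. y$i) UNIV \<le> s" "sum (\<lambda>i. y$i) UNIV - 2 * y$c \<le> s" unfolding Qbip_def by auto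
  show "y \<in> SS R s \<union> Lbip R c s"
  proof (cases "y$c \<ge> 0")
    case True
    then have "\<forall>i. 0 \<le> y$i" using H(1) by metis
    then show ?thesis using H unfolding SS_def by blast
  next
    case False
    then have "y$c \<le> 0" by linarith
    then show ?thesis using H unfolding Lbip_def by blast
  qed
qed

lemma Qbip_polytope:
  fixes R :: "'n::finite set"
  shows "polytope (Qbip R c s)"
proof -
  let ?w1 = "(\<chi> i. 1) :: real^'n"
  let ?w2 = "(\<chi> i. if i = c then -1 else 1) :: real^'n"
  have i1: "?w1 \<bullet> y = sum (\<lambda>i. y$i) UNIV" for y :: "real^'n"
    by (simp add: inner_vec_def)
  have i2: "?w2 \<bullet> y = sum (\<lambda>i. y$i) UNIV - 2 * y$c" for y :: "real^'n"
  proof -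
    have "?w2 \<bullet> y = sum (\<lambda>i. y$i - (if i = c then 2 * y$i else 0)) UNIV"
      unfolding inner_vec_def by (intro sum.cong) auto
    also have "\<dots> = sum (\<lambda>i. y$i) UNIV - 2 * y$c"
      by (simp add: sum_subtractf)
    finally show ?thesis .
  qed
  let ?F = "(\<lambda>i. {y. axis i 1 \<bullet> y \<ge> (0::real)}) ` (UNIV - {c}) \<union>
            (\<lambda>i. {y. axis i 1 \<bullet> y = (0::real)}) ` (UNIV - R) \<union>
            {{y. ?w1 \<bullet> y \<le> s}, {y. ?w2 \<bullet> y \<le> s}}"
  have ax: "axis i 1 \<bullet> y = y$i" for i and y :: "real^'n"
    by (simp add: inner_axis')
  have eq: "Qbip R c s = \<Inter> ?F"
  proof (intro set_eqI)
    fix y :: "real^'n"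
    have "y \<in> \<Inter> ?F \<longleftrightarrow> (\<forall>i\<in>UNIV - {c}. 0 \<le> y$i) \<and> (\<forall>i\<in>UNIV - R. y$i = 0) \<and>
        ?w1 \<bullet> y \<le> s \<and> ?w2 \<bullet> y \<le> s"
      by (simp only: Inter_Un_distrib Int_iff Inter_insert Inter_empty Int_UNIV_right INT_iff mem_Collect_eq ax conj_assoc)
    also have "\<dots> \<longleftrightarrow> y \<in> Qbip R c s" unfolding Qbip_def i1 i2 by blast
    finally show "y \<in> Qbip R c s \<longleftrightarrow> y \<in> \<Inter> ?F" by blast
  qed
  have ph: "polyhedron (\<Inter> ?F)"
  proof (rule polyhedron_Inter)
    show "finite ?F" by simp
  next
    fix S assume "S \<in> ?F"
    then consider (a) i where "S = {y. axis i 1 \<bullet> y \<ge> (0::real)}"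
      | (b) i where "S = {y. axis i 1 \<bullet> y = (0::real)}"
      | (c) "S = {y. ?w1 \<bullet> y \<le> s}" | (d) "S = {y. ?w2 \<bullet> y \<le> s}"
      by blast
    then show "polyhedron S"
    proof cases
      case a then show ?thesis by (simp only: polyhedron_halfspace_ge)
    next
      case b then show ?thesis by (simp only: polyhedron_hyperplane)
    next
      case c then show ?thesis by (simp only: polyhedron_halfspace_le)
    next
      case d then show ?thesis by (simp only: polyhedron_halfspace_le)
    qed
  qed
  have bd: "bounded (Qbip R c s)"
  proof -
    have "norm y \<le> \<bar>s\<bar>" if "y \<in> Qbip R c s" for y
    proof -
      have "sum (\<lambda>i. \<bar>y$i\<bar>) UNIV = sum (\<lambda>i. y$i + (if i = c then \<bar>y$c\<bar> - y$c else 0)) UNIV"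
        using that unfolding Qbip_def by (intro sum.cong) auto
      also have "\<dots> = sum (\<lambda>i. y$i) UNIV + (\<bar>y$c\<bar> - y$c)"
        by (simp add: sum.distrib)
      also have "\<dots> \<le> s" using that unfolding Qbip_def by auto
      finally show ?thesis using norm_le_l1_cart[of y] by linarith
    qed
    then show ?thesis unfolding bounded_iff by blast
  qed
  show ?thesis unfolding polytope_eq_bounded_polyhedron using bd ph eq by simp
qed




definition Acut :: "'n::finite \<Rightarrow> 'n \<Rightarrow> real \<Rightarrow> real \<Rightarrow> (real^'n) set" where
  "Acut a b l s = {y \<in> SS UNIV s. l * y$b \<le> (1 - l) * y$a}"

lemma cut_inv:
  fixes a b :: "'n::finite"
  assumes ne: "a \<noteq> b" and nz: "\<mu> \<noteq> 0" "k \<noteq> 0"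
  shows "mg a b (1/\<mu>) (1/\<mu>) (- l / k) 0 (1 / k) *v (mg a b \<mu> \<mu> (\<mu> * l) 0 k *v x) = x"
    "mg a b \<mu> \<mu> (\<mu> * l) 0 k *v (mg a b (1/\<mu>) (1/\<mu>) (- l / k) 0 (1 / k) *v x) = x"
proof -
  show "mg a b (1/\<mu>) (1/\<mu>) (- l / k) 0 (1 / k) *v (mg a b \<mu> \<mu> (\<mu> * l) 0 k *v x) = x"
    unfolding vec_eq_iff
  proof
    fix i show "(mg a b (1/\<mu>) (1/\<mu>) (- l / k) 0 (1 / k) *v (mg a b \<mu> \<mu> (\<mu> * l) 0 k *v x))$i = x$i"
      using nz ne by (cases "i = a"; cases "i = b") (simp_all add: mg_mv[OF ne] field_simps)
  qed
  show "mg a b \<mu> \<mu> (\<mu> * l) 0 k *v (mg a b (1/\<mu>) (1/\<mu>) (- l / k) 0 (1 / k) *v x) = x"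
    unfolding vec_eq_iff
  proof
    fix i show "(mg a b \<mu> \<mu> (\<mu> * l) 0 k *v (mg a b (1/\<mu>) (1/\<mu>) (- l / k) 0 (1 / k) *v x))$i = x$i"
      using nz ne by (cases "i = a"; cases "i = b") (simp_all add: mg_mv[OF ne] field_simps)
  qed
qed

lemma cut_image:
  fixes a b :: "'n::finite"
  assumes ne: "a \<noteq> b" and l: "0 < l" "l < 1" and mu: "\<mu> > 0" and rs: "\<mu> * r = s"
  shows "(\<lambda>x. mg a b \<mu> \<mu> (\<mu> * l) 0 (\<mu> * (1 - l)) *v x) ` SS UNIV r = Acut a b l s"
proof -
  let ?M = "mg a b \<mu> \<mu> (\<mu> * l) 0 (\<mu> * (1 - l))"
  let ?G = "mg a b (1/\<mu>) (1/\<mu>) (- l / (\<mu> * (1 - l))) 0 (1 / (\<mu> * (1 - l)))"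
  have l1: "1 - l > 0" using l by simp
  have nz: "\<mu> \<noteq> 0" "\<mu> * (1 - l) \<noteq> 0" using mu l by auto
  have pos: "\<mu> * (1 - l) > 0" using mu l by simp
  have "(\<lambda>x. ?M *v x) ` SS UNIV r = {y. ?G *v y \<in> SS UNIV r}"
    by (rule image_inv) (rule cut_inv[OF ne nz])+
  also have "\<dots> = Acut a b l s"
  proof (intro set_eqI)
    fix y :: "real^'n"
    have g: "(?G *v y)$i = (if i = a then y$a / \<mu> - l * y$b / (\<mu> * (1 - l))
        else if i = b then y$b / (\<mu> * (1 - l)) else y$i / \<mu>)" for i
      using ne by (simp add: mg_mv[OF ne])
    have ga0: "(?G *v y)$a = y$a / \<mu> - l * y$b / (\<mu> * (1 - l))" using g[of a] by simp
    have ga1: "y$a / \<mu> - l * y$b / (\<mu> * (1 - l)) = ((1 - l) * y$a - l * y$b) / (\<mu> * (1 - l))"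
      using nz by (simp add: field_simps)
    have ga: "(?G *v y)$a = ((1 - l) * y$a - l * y$b) / (\<mu> * (1 - l))" using ga0 ga1 by simp
    have sm: "sum (\<lambda>i. (?G *v y)$i) UNIV = sum (\<lambda>i. y$i) UNIV / \<mu>"
    proof -
      have "sum (\<lambda>i. (?G *v y)$i) UNIV = sum (\<lambda>i. ((1/\<mu>) *\<^sub>R y)$i) UNIV
          + ((?G *v y)$a - ((1/\<mu>) *\<^sub>R y)$a) + ((?G *v y)$b - ((1/\<mu>) *\<^sub>R y)$b)"
        by (rule sum_mod2[OF ne]) (simp add: mg_mv[OF ne])
      also have "\<dots> = sum (\<lambda>i. ((1/\<mu>) *\<^sub>R y)$i) UNIV"
      proof -
        have gb0: "(?G *v y)$b = y$b / (\<mu> * (1 - l))" using g[of b] ne by simp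
        have e: "l * y$b / (\<mu> * (1 - l)) = y$b / (\<mu> * (1 - l)) - y$b / \<mu>"
          using nz by (simp add: field_simps)
        show ?thesis using ga0 gb0 e by simp
      qed
      also have "\<dots> = sum (\<lambda>i. y$i) UNIV / \<mu>"
        by (simp add: sum_divide_distrib)
      finally show ?thesis .
    qed
    have p: "(\<forall>i. 0 \<le> (?G *v y)$i) \<longleftrightarrow> (\<forall>i. 0 \<le> y$i) \<and> l * y$b \<le> (1 - l) * y$a"
    proof
      assume H: "\<forall>i. 0 \<le> (?G *v y)$i"
      have hb: "0 \<le> y$b" using spec[OF H, of b] g[of b] ne pos by (auto simp: zero_le_divide_iff)
      have ha: "l * y$b \<le> (1 - l) * y$a" using spec[OF H, of a] ga pos by (auto simp: zero_le_divide_iff)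
      have "0 \<le> (1 - l) * y$a" using ha hb l by (smt (verit) mult_nonneg_nonneg)
      then have "0 \<le> y$a" using l1 by (simp add: zero_le_mult_iff)
      moreover have "0 \<le> y$i" if "i \<noteq> a" "i \<noteq> b" for i
      proof -
        have "0 \<le> y$i / \<mu>" using spec[OF H, of i] g[of i] that by simp
        then show ?thesis using mu by (simp add: zero_le_divide_iff)
      qed
      ultimately have "\<forall>i. 0 \<le> y$i" using hb by metis
      then show "(\<forall>i. 0 \<le> y$i) \<and> l * y$b \<le> (1 - l) * y$a" using ha by blast
    next
      assume H: "(\<forall>i. 0 \<le> y$i) \<and> l * y$b \<le> (1 - l) * y$a"
      show "\<forall>i. 0 \<le> (?G *v y)$i"
      proof
        fix i
        show "0 \<le> (?G *v y)$i"
        proof (cases "i = a")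
          case True then show ?thesis using ga H mu l1 by simp
        next
          case False then show ?thesis using g[of i] H mu l1 by simp
        qed
      qed
    qed
    have s2: "sum (\<lambda>i. y$i) UNIV / \<mu> \<le> r \<longleftrightarrow> sum (\<lambda>i. y$i) UNIV \<le> s"
      using mu rs by (simp add: divide_le_eq mult.commute)
    show "y \<in> {y. ?G *v y \<in> SS UNIV r} \<longleftrightarrow> y \<in> Acut a b l s"
      unfolding Acut_def SS_def mem_Collect_eq sm p s2 by auto
  qed
  finally show ?thesis .
qed

lemma cut_det:
  fixes a b :: "'n::{finite,wellorder}"
  assumes "a \<noteq> b"
  shows "det (mg a b \<mu> \<mu> (\<mu> * l) 0 (\<mu> * (1 - l))) = \<mu> ^ CARD('n) * (1 - l)"
proof -
  have "card {a, b} \<le> CARD('n)" by (rule card_mono) auto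
  then have c: "2 + (CARD('n) - 2) = CARD('n)" using assms by simp
  have "det (mg a b \<mu> \<mu> (\<mu> * l) 0 (\<mu> * (1 - l))) = \<mu> * (\<mu> * (1 - l)) * \<mu> ^ (CARD('n) - 2)"
    by (rule mg_det_tri[OF assms]) simp
  also have "\<dots> = \<mu> ^ (2 + (CARD('n) - 2)) * (1 - l)" by (simp add: power_add power2_eq_square)
  finally show ?thesis unfolding c .
qed

lemma I_image:
  fixes a b :: "'n::finite"
  assumes ne: "a \<noteq> b" and l: "0 < l" "l < 1"
  shows "(\<lambda>x. mg a b 1 l 0 (1 - l) (1/l) *v x) ` SS (UNIV - {b}) s = Acut a b l s \<inter> Acut b a (1 - l) s"
proof -
  let ?M = "mg a b 1 l 0 (1 - l) (1/l)"
  let ?G = "mg a b 1 (1/l) 0 (- (1 - l)) l"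
  have "(\<lambda>x. ?M *v x) ` SS (UNIV - {b}) s = {y. ?G *v y \<in> SS (UNIV - {b}) s}"
  proof (rule image_inv)
    fix x :: "real^'n"
    show "?G *v (?M *v x) = x"
      using l ne by (simp add: vec_eq_iff mg_mv[OF ne] field_simps)
    show "?M *v (?G *v x) = x"
      using l ne by (simp add: vec_eq_iff mg_mv[OF ne] field_simps)
  qed
  also have "\<dots> = Acut a b l s \<inter> Acut b a (1 - l) s"
  proof (intro set_eqI)
    fix y :: "real^'n"
    have g: "(?G *v y)$i = (if i = a then y$a / l else if i = b then l * y$b - (1 - l) * y$a else y$i)" for i
      using ne by (simp add: mg_mv[OF ne] algebra_simps)
    have sm0: "sum (\<lambda>i. (?G *v y)$i) UNIV = sum (\<lambda>i. y$i) UNIV + ((?G *v y)$a - y$a) + ((?G *v y)$b - y$b)"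
      by (rule sum_mod2[OF ne]) (simp add: mg_mv[OF ne])
    have sm: "sum (\<lambda>i. (?G *v y)$i) UNIV = sum (\<lambda>i. y$i) UNIV + (y$a / l - y$a) + (l * y$b - (1 - l) * y$a - y$b)"
      using sm0 g[of a] g[of b] ne by simp
    show "y \<in> {y. ?G *v y \<in> SS (UNIV - {b}) s} \<longleftrightarrow> y \<in> Acut a b l s \<inter> Acut b a (1 - l) s"
    proof
      assume "y \<in> {y. ?G *v y \<in> SS (UNIV - {b}) s}"
      then have H: "\<forall>i. 0 \<le> (?G *v y)$i" "(?G *v y)$b = 0" "sum (\<lambda>i. (?G *v y)$i) UNIV \<le> s"
        unfolding SS_def by auto
      have eqb: "l * y$b = (1 - l) * y$a" using H(2) g[of b] ne by simp
      have ya: "0 \<le> y$a" using spec[OF H(1), of a] g[of a] l by (simp add: zero_le_divide_iff)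
      have yb: "0 \<le> y$b" using eqb ya l by (smt (verit) mult_nonneg_nonneg zero_le_mult_iff)
      have "\<forall>i. 0 \<le> y$i"
      proof
        fix i show "0 \<le> y$i" using spec[OF H(1), of i] g[of i] ya yb by (cases "i = a"; cases "i = b") auto
      qed
      moreover have "sum (\<lambda>i. y$i) UNIV \<le> s"
      proof -
        have "y$a / l - y$a - y$b = 0"
        proof -
          have "l * (y$a / l - y$a - y$b) = (1 - l) * y$a - l * y$b" using l by (simp add: field_simps)
          then show ?thesis using eqb l by simp
        qed
        then show ?thesis using H(3) sm eqb by linarith
      qed
      ultimately show "y \<in> Acut a b l s \<inter> Acut b a (1 - l) s"
        unfolding Acut_def SS_def using eqb by auto
    next
      assume "y \<in> Acut a b l s \<inter> Acut b a (1 - l) s"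
      then have H: "\<forall>i. 0 \<le> y$i" "sum (\<lambda>i. y$i) UNIV \<le> s" "l * y$b \<le> (1 - l) * y$a"
        "(1 - l) * y$a \<le> l * y$b" unfolding Acut_def SS_def by auto
      have eqb: "l * y$b = (1 - l) * y$a" using H(3,4) by linarith
      have gb: "(?G *v y)$b = 0" using g[of b] ne eqb by simp
      have "y$a / l - y$a - y$b = 0"
      proof -
        have "l * (y$a / l - y$a - y$b) = (1 - l) * y$a - l * y$b" using l by (simp add: field_simps)
        then show ?thesis using eqb l by simp
      qed
      then have s3: "sum (\<lambda>i. (?G *v y)$i) UNIV \<le> s" using sm H(2) eqb by linarith
      have "\<forall>i. 0 \<le> (?G *v y)$i"
      proof
        fix i show "0 \<le> (?G *v y)$i" using g[of i] H(1) gb l by (cases "i = a"; cases "i = b") auto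
      qed
      moreover have "\<forall>i. i \<notin> UNIV - {b} \<longrightarrow> (?G *v y)$i = 0" using gb by auto
      ultimately show "y \<in> {y. ?G *v y \<in> SS (UNIV - {b}) s}" using s3 unfolding SS_def by blast
    qed
  qed
  finally show ?thesis .
qed

lemma I_det:
  fixes a b :: "'n::{finite,wellorder}"
  assumes "a \<noteq> b" "0 < l"
  shows "det (mg a b 1 l 0 (1 - l) (1/l)) = 1"
  using mg_det_tri[OF assms(1), of 0 "1 - l" 1 l "1/l"] assms(2) by simp

lemma cut_union: "Acut a b l s \<union> Acut b a (1 - l) s = SS UNIV s"
  unfolding Acut_def by auto




definition Zok :: "((real^'n) set \<Rightarrow> (real^'n) set) \<Rightarrow> bool" where
  "Zok Z \<longleftrightarrow> (\<forall>P \<in> polytopes_o. Z P \<in> convex_bodies_o) \<and> Linf_valuation Z \<and> SL_covariant Z"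

definition uok :: "real^'n::{finite,wellorder} \<Rightarrow> bool" where
  "uok u \<longleftrightarrow> (\<forall>i. i \<noteq> ix 1 \<longrightarrow> u$i = 0)"

lemma image_polytopes_o:
  assumes "P \<in> polytopes_o"
  shows "(\<lambda>x. A *v x) ` P \<in> polytopes_o"
proof -
  have "polytope ((\<lambda>x. A *v x) ` P)"
    using assms by (intro polytope_linear_image) (auto simp: polytopes_o_def)
  moreover have "0 \<in> (\<lambda>x. A *v x) ` P"
    using assms by (auto simp: polytopes_o_def intro!: image_eqI[of 0 _ 0])
  ultimately show ?thesis by (simp add: polytopes_o_def)
qed

lemma transfer:
  fixes u :: "(real, 'n::{finite,wellorder}) vec"
  assumes Z: "Zok Z" and P: "P \<in> polytopes_o" and ne: "a \<noteq> b" and a1: "a \<noteq> ix 1" and b1: "b \<noteq> ix 1"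
    and d: "det (mg a b \<mu> \<alpha> \<beta> \<gamma> \<delta>) = 1" and mu: "\<mu> > 0" and u: "uok u"
  shows "support_fun (Z ((\<lambda>x. mg a b \<mu> \<alpha> \<beta> \<gamma> \<delta> *v x) ` P)) u = \<mu> * support_fun (Z P) u"
proof -
  have "support_fun (Z ((\<lambda>x. mg a b \<mu> \<alpha> \<beta> \<gamma> \<delta> *v x) ` P)) u
      = support_fun (Z P) (Finite_Cartesian_Product.transpose (mg a b \<mu> \<alpha> \<beta> \<gamma> \<delta>) *v u)"
    using Z d P by (intro SL_transfer) (auto simp: Zok_def)
  also have "Finite_Cartesian_Product.transpose (mg a b \<mu> \<alpha> \<beta> \<gamma> \<delta>) *v u = \<mu> *\<^sub>R u"
    using u a1 b1 by (intro mg_T[OF ne]) (auto simp: uok_def)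
  also have "support_fun (Z P) (\<mu> *\<^sub>R u) = \<mu> * support_fun (Z P) u"
    using Z P mu by (intro support_fun_scale) (auto simp: Zok_def)
  finally show ?thesis .
qed

lemma ix_ne:
  assumes "1 \<le> k" "k \<le> CARD('n)" "1 \<le> l" "l \<le> CARD('n)" "k \<noteq> l"
  shows "(ix k :: 'n::{finite,wellorder}) \<noteq> ix l"
  using ix_inj[where 'n='n, of k l] assms by blast

lemma SSU_polytope:
  assumes "s > 0"
  shows "SS (UNIV :: 'n::{finite,wellorder} set) s \<in> polytopes_o"
proof -
  have "SS (Rd CARD('n) :: 'n set) s \<in> polytopes_o" by (rule SS_polytope[OF assms])
  then show ?thesis by (simp only: Rd_full)
qed

lemma scale_lt:
  fixes Z :: "(real, 'n::{finite,wellorder}) vec set \<Rightarrow> (real, 'n) vec set" and u :: "(real, 'n) vec"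
  assumes Z: "Zok Z" and u: "uok u" and n3: "CARD('n) \<ge> 3" and d: "1 \<le> d" "d < CARD('n)" and s: "s > 0"
  shows "support_fun (Z ((\<lambda>x. s *\<^sub>R x) ` simplex_T d)) u = s * support_fun (Z (simplex_T d)) u"
proof -
  let ?n = "CARD('n)"
  let ?a = "ix 2 :: 'n" and ?b = "ix ?n :: 'n"
  let ?t = "1 / s ^ (?n - 1)"
  let ?M = "mg ?a ?b s s 0 0 ?t"
  have ne: "?a \<noteq> ?b" using ix_ne[where 'n='n, of 2 ?n] n3 by simp
  have a1: "?a \<noteq> ix 1" using ix_ne[where 'n='n, of 2 1] n3 by simp
  have b1: "?b \<noteq> ix 1" using ix_ne[where 'n='n, of ?n 1] n3 by simp
  have det: "det ?M = 1"
  proof -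
    have e0: "?n - 1 = Suc (?n - 2)" using n3 by simp
    have e: "s * s ^ (?n - 2) = s ^ (?n - 1)" unfolding e0 by simp
    have "det ?M = s * ?t * s ^ (?n - 2)" by (rule mg_det_tri[OF ne]) simp
    also have "\<dots> = 1" using s e by (simp add: field_simps)
    finally show ?thesis .
  qed
  have bR: "?b \<notin> Rd d" using ix_in_Rd[where 'n='n, of ?n d] d n3 by simp
  have img: "(\<lambda>x. s *\<^sub>R x) ` simplex_T d = (\<lambda>x. ?M *v x) ` simplex_T d"
  proof (rule image_cong[OF refl])
    fix x :: "(real, 'n) vec" assume "x \<in> simplex_T d"
    then have "x$?b = 0" using bR by (simp add: simplex_T_SS SS_def)
    then show "s *\<^sub>R x = ?M *v x" by (simp add: vec_eq_iff mg_mv[OF ne])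
  qed
  have P: "simplex_T d \<in> (polytopes_o :: (real, 'n) vec set set)"
    using SS_polytope[where 'n='n, of 1 d] by (simp add: simplex_T_SS)
  show ?thesis unfolding img by (rule transfer[OF Z P ne a1 b1 det s u])
qed

lemma bip_mono:
  fixes Z :: "(real, 'n::{finite,wellorder}) vec set \<Rightarrow> (real, 'n) vec set" and u :: "(real, 'n) vec"
  assumes Z: "Zok Z" and u: "uok u" and n3: "CARD('n) \<ge> 3" and d: "1 \<le> d" "d < CARD('n)" and s: "s > 0"
  shows "support_fun (Z (SS (Rd d) s)) u \<le> support_fun (Z (SS (Rd (Suc d)) s)) u"
proof -
  let ?n = "CARD('n)"
  let ?c = "ix (Suc d) :: 'n"
  let ?R = "Rd (Suc d) :: 'n set"
  let ?K = "SS ?R s"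
  have R: "?R = insert ?c (Rd d)" "?c \<notin> Rd d" using Rd_Suc[where 'n='n, of d] d by auto
  have c1: "?c \<noteq> ix 1" using ix_ne[where 'n='n, of "Suc d" 1] d by simp
  obtain a \<alpha> \<beta> \<gamma> \<delta> where a: "a \<noteq> ?c" "a \<noteq> ix 1" "det (mg a ?c 1 \<alpha> \<beta> \<gamma> \<delta>) = 1"
    "(\<lambda>x. mg a ?c 1 \<alpha> \<beta> \<gamma> \<delta> *v x) ` ?K = Lbip ?R ?c s"
  proof (cases "d \<ge> 2")
    case True
    have ne: "ix d \<noteq> ?c" using ix_ne[where 'n='n, of d "Suc d"] d by simp
    have a1: "ix d \<noteq> (ix 1 :: 'n)" using ix_ne[where 'n='n, of d 1] d True by simp
    have aR: "ix d \<in> ?R" using ix_in_Rd[where 'n='n, of d "Suc d"] d by simp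
    have cR: "?c \<in> ?R" using R by simp
    show ?thesis
      by (rule that[OF ne a1 mg_det_rot[OF ne] bip_rot[OF ne aR cR]])
  next
    case False
    then have d1: "d = 1" using d by simp
    have ne: "ix 3 \<noteq> ?c" using ix_ne[where 'n='n, of 3 "Suc d"] d1 n3 by simp
    have a1: "ix 3 \<noteq> (ix 1 :: 'n)" using ix_ne[where 'n='n, of 3 1] n3 by simp
    have aR: "ix 3 \<notin> ?R" using ix_in_Rd[where 'n='n, of 3 "Suc d"] d1 n3 by simp
    have cR: "?c \<in> ?R" using R by simp
    have det: "det (mg (ix 3) ?c 1 (-1) 0 0 (-1)) = 1" using mg_det_tri[OF ne] by simp
    show ?thesis
      by (rule that[OF ne a1 det bip_diag[OF ne aR cR]])
  qed
  let ?L = "Lbip ?R ?c s"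
  have K: "?K \<in> polytopes_o" by (rule SS_polytope[OF s])
  have L: "?L \<in> polytopes_o" using image_polytopes_o[OF K] a(4) by metis
  have I: "?K \<inter> ?L = SS (Rd d) s" unfolding R(1) by (rule bip_int[OF R(2)])
  have IP: "?K \<inter> ?L \<in> polytopes_o" unfolding I by (rule SS_polytope[OF s])
  have U: "?K \<union> ?L \<in> polytopes_o"
  proof -
    have "polytope (?K \<union> ?L)" unfolding bip_union by (rule Qbip_polytope)
    moreover have "0 \<in> ?K" using K by (simp add: polytopes_o_def)
    ultimately show ?thesis by (simp add: polytopes_o_def)
  qed
  have val: "max (support_fun (Z (?K \<union> ?L)) u) (support_fun (Z (?K \<inter> ?L)) u)
      = max (support_fun (Z ?K) u) (support_fun (Z ?L) u)"
    using Z K L U IP unfolding Zok_def Linf_valuation_def by blast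
  have hL: "support_fun (Z ?L) u = 1 * support_fun (Z ?K) u"
    unfolding a(4)[symmetric] by (rule transfer[OF Z K a(1) a(2) c1 a(3) _ u]) simp
  have "support_fun (Z (?K \<inter> ?L)) u \<le> support_fun (Z ?K) u"
  proof -
    have "support_fun (Z (?K \<inter> ?L)) u \<le> max (support_fun (Z (?K \<union> ?L)) u) (support_fun (Z (?K \<inter> ?L)) u)"
      by simp
    also have "\<dots> = support_fun (Z ?K) u" using val hL by simp
    finally show ?thesis .
  qed
  then show ?thesis unfolding I .
qed




lemma cut_step:
  fixes Z :: "(real, 'n::{finite,wellorder}) vec set \<Rightarrow> (real, 'n) vec set" and u :: "(real, 'n) vec"
  assumes Z: "Zok Z" and u: "uok u" and n3: "CARD('n) \<ge> 3" and r: "0 < r" "r < s"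
  shows "(s / r) * support_fun (Z (SS UNIV r)) u \<le> support_fun (Z (SS UNIV s)) u
    \<and> ((r / s) ^ CARD('n) = 1 / 2 \<longrightarrow> support_fun (Z (SS UNIV s)) u = (s / r) * support_fun (Z (SS UNIV r)) u)"
proof -
  let ?n = "CARD('n)"
  let ?a = "ix 2 :: 'n" and ?b = "ix ?n :: 'n"
  define q where "q = r / s"
  define l where "l = 1 - q ^ ?n"
  define \<mu> where "\<mu> = s / r"
  let ?h = "\<lambda>P. support_fun (Z P) u"
  have s: "s > 0" using r by simp
  have q: "0 < q" "q < 1" using r unfolding q_def by (auto simp: field_simps)
  have n0: "?n = Suc (?n - 1)" using n3 by simp
  have qn0: "0 < q ^ ?n" using q by simp
  have qn1: "q ^ ?n < 1" using q by (subst n0, intro power_Suc_less_one) auto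
  note qn = qn0 qn1
  have l: "0 < l" "l < 1" using qn unfolding l_def by auto
  have mu: "\<mu> > 0" "\<mu> * r = s" "\<mu> * q = 1" using r unfolding \<mu>_def q_def by auto
  have mun: "\<mu> ^ ?n * q ^ ?n = 1" using mu(3) by (metis power_mult_distrib power_one)
  have ne: "?a \<noteq> ?b" using ix_ne[where 'n='n, of 2 ?n] n3 by simp
  have a1: "?a \<noteq> ix 1" using ix_ne[where 'n='n, of 2 1] n3 by simp
  have b1: "?b \<noteq> ix 1" using ix_ne[where 'n='n, of ?n 1] n3 by simp
  have ne': "?b \<noteq> ?a" using ne by simp
  have l': "0 < 1 - l" "1 - l < 1" using l by auto
  let ?A = "Acut ?a ?b l s"
  have Aimg: "(\<lambda>x. mg ?a ?b \<mu> \<mu> (\<mu> * l) 0 (\<mu> * (1 - l)) *v x) ` SS UNIV r = ?A"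
    by (rule cut_image[OF ne l mu(1) mu(2)])
  have Adet: "det (mg ?a ?b \<mu> \<mu> (\<mu> * l) 0 (\<mu> * (1 - l))) = 1"
    using cut_det[OF ne, of \<mu> l] mun unfolding l_def by simp
  have Pr: "SS (UNIV :: 'n set) r \<in> polytopes_o" by (rule SSU_polytope[OF r(1)])
  have Ps: "SS (UNIV :: 'n set) s \<in> polytopes_o" by (rule SSU_polytope[OF s])
  have AP: "?A \<in> polytopes_o" using image_polytopes_o[OF Pr] Aimg by metis
  have hA: "?h ?A = \<mu> * ?h (SS UNIV r)"
    unfolding Aimg[symmetric] by (rule transfer[OF Z Pr ne a1 b1 Adet mu(1) u])
  let ?B = "Acut ?b ?a (1 - l) s"
  have Bimg1: "(\<lambda>x. mg ?b ?a 1 1 (1 * (1 - l)) 0 (1 * (1 - (1 - l))) *v x) ` SS UNIV s = ?B"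
    by (rule cut_image[OF ne' l']) auto
  have BP: "?B \<in> polytopes_o" using image_polytopes_o[OF Ps] Bimg1 by metis
  let ?I = "?A \<inter> ?B"
  have Rm: "UNIV - {?b} = Rd (?n - 1)" using Rd_minus[where 'n='n] n3 by simp
  have Iimg: "(\<lambda>x. mg ?a ?b 1 l 0 (1 - l) (1/l) *v x) ` SS (Rd (?n - 1)) s = ?I"
    unfolding Rm[symmetric] by (rule I_image[OF ne l])
  have Pm: "SS (Rd (?n - 1)) s \<in> (polytopes_o :: (real, 'n) vec set set)" by (rule SS_polytope[OF s])
  have IP: "?I \<in> polytopes_o" using image_polytopes_o[OF Pm] Iimg by metis
  have hI0: "?h ?I = 1 * ?h (SS (Rd (?n - 1)) s)"
    unfolding Iimg[symmetric] by (rule transfer[OF Z Pm ne a1 b1 I_det[OF ne l(1)] _ u]) simp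
  have "?h (SS (Rd (?n - 1)) s) \<le> ?h (SS (Rd (Suc (?n - 1))) s)"
    by (rule bip_mono[OF Z u n3 _ _ s]) (use n3 in auto)
  then have hI: "?h ?I \<le> ?h (SS UNIV s)" using hI0 n0[symmetric] by (simp add: Rd_full)
  have U: "?A \<union> ?B = SS UNIV s" by (rule cut_union)
  have val: "max (?h (?A \<union> ?B)) (?h ?I) = max (?h ?A) (?h ?B)"
    using Z AP BP IP Ps U unfolding Zok_def Linf_valuation_def by (metis (no_types, lifting))
  then have main: "?h (SS UNIV s) = max (?h ?A) (?h ?B)" using hI U by (simp add: max_def split: if_splits)
  have part1: "(s / r) * ?h (SS UNIV r) \<le> ?h (SS UNIV s)" using main hA unfolding \<mu>_def by simp
  have part2: "?h (SS UNIV s) = (s / r) * ?h (SS UNIV r)" if half: "(r / s) ^ ?n = 1 / 2"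
  proof -
    have lh: "l = 1 / 2" using half unfolding l_def q_def by simp
    have Bimg: "(\<lambda>x. mg ?b ?a \<mu> \<mu> (\<mu> * (1 - l)) 0 (\<mu> * (1 - (1 - l))) *v x) ` SS UNIV r = ?B"
      by (rule cut_image[OF ne' l' mu(1) mu(2)])
    have Bdet: "det (mg ?b ?a \<mu> \<mu> (\<mu> * (1 - l)) 0 (\<mu> * (1 - (1 - l)))) = 1"
      using cut_det[OF ne', of \<mu> "1 - l"] mun half unfolding q_def lh by simp
    have hB: "?h ?B = \<mu> * ?h (SS UNIV r)"
      unfolding Bimg[symmetric] by (rule transfer[OF Z Pr ne' b1 a1 Bdet mu(1) u])
    show ?thesis using main hA hB unfolding \<mu>_def by simp
  qed
  show ?thesis using part1 part2 by blast
qed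

lemma const_fun:
  fixes G :: "real \<Rightarrow> real"
  assumes q: "0 < q" "q < 1"
    and mono: "\<And>r s. 0 < r \<Longrightarrow> r < s \<Longrightarrow> G r \<le> G s"
    and half: "\<And>s. 0 < s \<Longrightarrow> G s = G (s * q)"
    and st: "0 < s" "0 < t"
  shows "G s \<le> G t"
proof -
  have it: "G s = G (s * q ^ k)" for k
  proof (induction k)
    case 0 then show ?case by simp
  next
    case (Suc k)
    have "s * q ^ k > 0" using st q by simp
    then have h: "G (s * q ^ k) = G (s * q ^ k * q)" by (rule half)
    have e: "s * q ^ Suc k = s * q ^ k * q" by (simp add: algebra_simps)
    show ?case unfolding e using Suc.IH h by (rule trans)
  qed
  obtain k where k: "q ^ k < t / s" using real_arch_pow_inv[of "t / s" q] st q by auto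
  have "s * q ^ k < t" using k st by (simp add: field_simps)
  moreover have "0 < s * q ^ k" using st q by simp
  ultimately have "G (s * q ^ k) \<le> G t" using mono by blast
  then show ?thesis using it by simp
qed

lemma scale_full:
  fixes Z :: "(real, 'n::{finite,wellorder}) vec set \<Rightarrow> (real, 'n) vec set" and u :: "(real, 'n) vec"
  assumes Z: "Zok Z" and u: "uok u" and n3: "CARD('n) \<ge> 3" and s: "s > 0"
  shows "support_fun (Z (SS UNIV s)) u = s * support_fun (Z (SS UNIV 1)) u"
proof -
  let ?n = "CARD('n)"
  define g where "g = (\<lambda>s. support_fun (Z (SS UNIV s)) u)"
  define G where "G = (\<lambda>s. g s / s)"
  define q where "q = root ?n (1 / 2)"
  have n0: "0 < ?n" using n3 by simp
  have qn: "q ^ ?n = 1 / 2" unfolding q_def by (rule real_root_pow_pos[OF n0]) simp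
  have q0: "0 < q" unfolding q_def using n0 by simp
  have q1: "q < 1" unfolding q_def using n0 by (simp add: real_root_lt_1_iff)
  have mono: "G r \<le> G t" if "0 < r" "r < t" for r t
  proof -
    have "(t / r) * g r \<le> g t" using cut_step[OF Z u n3 that] unfolding g_def by blast
    then have "(g r / r) * t \<le> g t" by (simp add: algebra_simps)
    then show ?thesis unfolding G_def using that by (simp add: pos_le_divide_eq)
  qed
  have half: "G t = G (t * q)" if "0 < t" for t
  proof -
    have r: "0 < t * q" "t * q < t" using that q0 q1 by auto
    have "((t * q) / t) ^ ?n = 1 / 2" using that qn by simp
    then have "g t = (t / (t * q)) * g (t * q)" using cut_step[OF Z u n3 r] unfolding g_def by blast
    then show ?thesis unfolding G_def using that q0 by (simp add: field_simps)
  qed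
  have "G s = G 1"
    using const_fun[where G=G and q=q and s=s and t=1, OF q0 q1 mono half]
      const_fun[where G=G and q=q and s=1 and t=s, OF q0 q1 mono half] s by simp
  then show ?thesis using s unfolding G_def g_def by (simp add: field_simps)
qed




theorem lemma4p2:
  fixes Z :: "(real, 'n::{finite,wellorder}) vec set \<Rightarrow> (real, 'n) vec set"
  assumes "CARD('n) \<ge> 3"
    and "\<forall>P \<in> polytopes_o. Z P \<in> convex_bodies_o"
    and "Linf_valuation Z"
    and "SL_covariant Z"
  shows "(\<forall>d s. 1 \<le> d \<and> d \<le> CARD('n) \<and> s > 0 \<longrightarrow>
            support_fun (Z ((\<lambda>x. s *\<^sub>R x) ` simplex_T d)) (std_basis 1)
              = s * support_fun (Z (simplex_T d)) (std_basis 1)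
          \<and> support_fun (Z ((\<lambda>x. s *\<^sub>R x) ` simplex_T d)) (- std_basis 1)
              = s * support_fun (Z (simplex_T d)) (- std_basis 1))
       \<and> (\<forall>d. 1 \<le> d \<and> d < CARD('n) \<longrightarrow>
            support_fun (Z (simplex_T d)) (std_basis 1)
              \<le> support_fun (Z (simplex_T (Suc d))) (std_basis 1)
          \<and> support_fun (Z (simplex_T d)) (- std_basis 1)
              \<le> support_fun (Z (simplex_T (Suc d))) (- std_basis 1))"
proof -
  have n3: "CARD('n) \<ge> 3" by (rule assms(1))
  have Z: "Zok Z" using assms(2-4) by (simp add: Zok_def)
  have u1: "uok (std_basis 1 :: (real, 'n) vec)"
    by (simp add: uok_def std_basis_ix axis_def)
  have u2: "uok (- std_basis 1 :: (real, 'n) vec)"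
    by (simp add: uok_def std_basis_ix axis_def)
  have scal: "support_fun (Z ((\<lambda>x. s *\<^sub>R x) ` simplex_T d)) u = s * support_fun (Z (simplex_T d)) u"
    if u: "uok u" and d: "1 \<le> d" "d \<le> CARD('n)" and s: "s > 0" for u :: "(real, 'n) vec" and d s
  proof (cases "d < CARD('n)")
    case True
    show ?thesis by (rule scale_lt[OF Z u n3 d(1) True s])
  next
    case False
    then have dn: "d = CARD('n)" using d by simp
    have T: "(simplex_T d :: (real, 'n) vec set) = SS UNIV 1"
      unfolding simplex_T_SS dn Rd_full ..
    have sT: "(\<lambda>x. s *\<^sub>R x) ` (simplex_T d :: (real, 'n) vec set) = SS UNIV s"
      unfolding T by (rule SS_scale[OF s])
    show ?thesis unfolding sT unfolding T by (rule scale_full[OF Z u n3 s])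
  qed
  have mono: "support_fun (Z (simplex_T d)) u \<le> support_fun (Z (simplex_T (Suc d))) u"
    if u: "uok u" and d: "1 \<le> d" "d < CARD('n)" for u :: "(real, 'n) vec" and d
    unfolding simplex_T_SS by (rule bip_mono[OF Z u n3 d]) simp
  show ?thesis using scal[OF u1] scal[OF u2] mono[OF u1] mono[OF u2] by blast
qed


end
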